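(* All eigenvalues of the linear operator $H(\pi)$ on $\mathbb V$ (equivalently, of the $C\times C$ tridiagonal matrix with diagonal entries $-\nu_i$, subdiagonal entries $(i+1,i)\mapsto\gamma_i$ and superdiagonal entries $(i,i+1)\mapsto i$, where $\gamma_i=\sigma d\,\pi_i^{d-1}$, $\nu_i=\gamma_i+i$) are real and strictly less than $-1$.
   Context: Fix integers $C\ge1$, $d\ge1$ and a real $\sigma>0$. $\mathbb V=\{v\in\mathbb R^{C+1}:v_0=0\}$, identified with $\mathbb R^C$ via coordinates $1,\dots,C$. $\pi\in\mathbb R^{C+1}$ is the unique vector with $1=\pi_0\ge\pi_1\ge\cdots\ge\pi_C\ge0$ satisfying $\sigma(\pi_{n-1}^d-\pi_n^d)=n(\pi_n-\pi_{n+1})$ for $1\le n\le C$, $\pi_{C+1}=0$. $H(\pi)$ is the linear map $(H(\pi)b)_n=\sigma d\,\pi_{n-1}^{d-1}b_{n-1}-(\sigma d\,\pi_n^{d-1}+n)b_n+nb_{n+1}$ for $1\le n\le C$ (with $b_0=b_{C+1}:=0$). *)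

theory Defs
  imports Complex_Main "Jordan_Normal_Form.Char_Poly"
begin

text \<open>Vectors pi are modelled as functions nat => real, pi n being the n-th
coordinate (n = 0..C+1).  The tridiagonal C x C matrix of H(pi) in the
coordinates 1..C of V; Isabelle matrix index r (0-based) corresponds to
coordinate r+1.\<close>

definition gam :: "real \<Rightarrow> nat \<Rightarrow> (nat \<Rightarrow> real) \<Rightarrow> nat \<Rightarrow> real" where
  "gam \<sigma> d \<pi> i = \<sigma> * real d * \<pi> i ^ (d - 1)"

definition nu :: "real \<Rightarrow> nat \<Rightarrow> (nat \<Rightarrow> real) \<Rightarrow> nat \<Rightarrow> real" where
  "nu \<sigma> d \<pi> i = gam \<sigma> d \<pi> i + real i"

definition Hmat :: "nat \<Rightarrow> real \<Rightarrow> nat \<Rightarrow> (nat \<Rightarrow> real) \<Rightarrow> real mat" where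
  "Hmat C \<sigma> d \<pi> = mat C C (\<lambda>(r, c).
      if c = r then - nu \<sigma> d \<pi> (r + 1)
      else if r = c + 1 then gam \<sigma> d \<pi> (c + 1)
      else if c = r + 1 then real (r + 1)
      else 0)"

end

theory Submission imports Defs begin

definition Mf :: "(nat \<Rightarrow> real) \<Rightarrow> nat \<Rightarrow> nat \<Rightarrow> real" where
  "Mf g i j = (if j = i then - (g i + real (i+1)) else if i = j + 1 then g j
      else if j = i + 1 then real (i+1) else 0)"

definition pw :: "(nat \<Rightarrow> real) \<Rightarrow> nat \<Rightarrow> real" where
  "pw g i = (\<Prod>k<i. real (k+1) / g k)"

lemma pw_Suc: "pw g (Suc i) = pw g i * real (i+1) / g i"
  by (simp add: pw_def)

lemma pw_pos: assumes "\<forall>k<C. g k > 0" "i \<le> C" shows "pw g i > 0"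
  unfolding pw_def using assms by (intro prod_pos) auto

lemma sym: assumes "\<forall>k<C. g k > 0" "i < C" "j < C"
  shows "pw g i * Mf g i j = pw g j * Mf g j i"
proof -
  have gi: "g i > 0" "g j > 0" using assms by auto
  consider "j = i" | "j = i + 1" | "i = j + 1" | "j \<noteq> i \<and> j \<noteq> i+1 \<and> i \<noteq> j+1" by blast
  then show ?thesis
  proof cases
    case 2 then show ?thesis using gi by (simp add: Mf_def pw_Suc)
  next
    case 3 then show ?thesis using gi by (simp add: Mf_def pw_Suc)
  qed (auto simp: Mf_def)
qed

lemma trans_eval:
  assumes "i < C"
  shows "(\<Sum>j<C. complex_of_real (Mf g j i) * u j) =
     of_nat i * u (i - 1) - of_real (g i + real (i+1)) * u i
     + (if i + 1 < C then of_real (g i) * u (i+1) else 0)"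
proof -
  have e: "\<And>j. complex_of_real (Mf g j i) * u j =
      (if j = i then - of_real (g i + real (i+1)) * u i else 0)
    + (if j = i - 1 \<and> i > 0 then of_nat i * u (i - 1) else 0)
    + (if j = i + 1 then of_real (g i) * u (i+1) else 0)"
    by (auto simp: Mf_def)
  show ?thesis unfolding e sum.distrib using assms
    by (cases i) (auto simp: algebra_simps)
qed


lemma tri_main:
  fixes C :: nat and g :: "nat \<Rightarrow> real" and V :: "nat \<Rightarrow> complex" and \<mu> :: complex
  assumes gpos: "\<forall>i<C. g i > 0"
    and eig: "\<forall>i<C. (\<Sum>j<C. complex_of_real (Mf g i j) * V j) = \<mu> * V i"
    and nz: "\<exists>i<C. V i \<noteq> 0"
  shows "\<mu> \<in> \<real> \<and> Re \<mu> < -1"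
proof
  define p where "p = pw g"
  have ppos: "\<And>i. i \<le> C \<Longrightarrow> p i > 0" unfolding p_def using pw_pos gpos by blast
  define S where "S i j = p i * Mf g i j" for i j
  have Ssym: "\<And>i j. i < C \<Longrightarrow> j < C \<Longrightarrow> S i j = S j i"
    unfolding S_def p_def using sym gpos by blast
  define Q where "Q = (\<Sum>i<C. \<Sum>j<C. cnj (V i) * of_real (S i j) * V j)"
  define W where "W = (\<Sum>i<C. p i * (cmod (V i))^2)"
  have W_pos: "W > 0"
  proof -
    obtain i0 where i0: "i0 < C" "V i0 \<noteq> 0" using nz by blast
    have "p i0 * (cmod (V i0))^2 > 0" using ppos[of i0] i0 by simp
    also have "p i0 * (cmod (V i0))^2 \<le> W" unfolding W_def
      by (rule member_le_sum) (use i0 ppos in \<open>auto intro!: mult_nonneg_nonneg less_imp_le[OF ppos]\<close>)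
    finally show ?thesis .
  qed
  have muQ: "\<mu> * of_real W = Q"
  proof -
    have sq: "\<And>z. complex_of_real ((cmod z)^2) = z * cnj z"
      by (metis complex_norm_square of_real_power)
    have "\<mu> * of_real W = (\<Sum>i<C. cnj (V i) * of_real (p i) * (\<mu> * V i))"
      unfolding W_def of_real_sum sum_distrib_left
      by (intro sum.cong refl) (simp only: of_real_mult sq; simp add: mult_ac)
    also have "\<dots> = (\<Sum>i<C. cnj (V i) * of_real (p i) * (\<Sum>j<C. complex_of_real (Mf g i j) * V j))"
      using eig by simp
    also have "\<dots> = Q" unfolding Q_def S_def sum_distrib_left
      by (intro sum.cong refl) (simp add: mult_ac)
    finally show ?thesis .
  qed
  have "cnj Q = (\<Sum>i<C. \<Sum>j<C. V i * of_real (S i j) * cnj (V j))"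
    unfolding Q_def by simp
  also have "\<dots> = (\<Sum>j<C. \<Sum>i<C. V i * of_real (S i j) * cnj (V j))"
    by (rule sum.swap)
  also have "\<dots> = Q" unfolding Q_def
    by (intro sum.cong refl) (simp add: Ssym mult_ac)
  finally have "Q \<in> \<real>" using Reals_cnj_iff by blast
  then have "Q / of_real W \<in> \<real>" by simp
  moreover have "\<mu> = Q / of_real W" using muQ W_pos by (simp add: field_simps)
  ultimately show "\<mu> \<in> \<real>" by simp
next
  define p where "p = pw g"
  have ppos: "\<And>i. i \<le> C \<Longrightarrow> p i > 0" unfolding p_def using pw_pos gpos by blast
  define u where "u j = complex_of_real (p j) * V j" for j
  have teig: "\<And>i. i < C \<Longrightarrow> (\<Sum>j<C. complex_of_real (Mf g j i) * u j) = \<mu> * u i"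
  proof -
    fix i assume i: "i < C"
    have "(\<Sum>j<C. complex_of_real (Mf g j i) * u j) = (\<Sum>j<C. complex_of_real (p i * Mf g i j) * V j)"
      unfolding u_def
      by (intro sum.cong refl) (use sym[OF gpos i] in \<open>simp add: p_def mult_ac\<close>)
    also have "\<dots> = of_real (p i) * (\<Sum>j<C. complex_of_real (Mf g i j) * V j)"
      by (simp add: sum_distrib_left mult_ac)
    also have "\<dots> = \<mu> * u i" using eig i by (simp add: u_def mult_ac)
    finally show "?thesis i" .
  qed
  have rec: "\<And>i. i < C \<Longrightarrow> (\<mu> + of_real (g i + real (i+1))) * u i =
     of_nat i * u (i - 1) + (if i + 1 < C then of_real (g i) * u (i+1) else 0)"
  proof -
    fix i assume i: "i < C"
    from teig[OF i] trans_eval[OF i, of g u] show "?thesis i" by (simp add: algebra_simps)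
  qed
  define m where "m = Max ((\<lambda>j. cmod (u j)) ` {..<C})"
  have C0: "C > 0" using nz by auto
  have mge: "\<And>j. j < C \<Longrightarrow> cmod (u j) \<le> m" unfolding m_def by (intro Max_ge) auto
  obtain i0 where i0: "i0 < C" "cmod (u i0) = m"
  proof -
    have "m \<in> (\<lambda>j. cmod (u j)) ` {..<C}" unfolding m_def using C0 by (intro Max_in) auto
    then show ?thesis using that by auto
  qed
  have mpos: "m > 0"
  proof -
    obtain i where i: "i < C" "V i \<noteq> 0" using nz by blast
    have "cmod (u i) > 0" using i ppos[of i] by (simp add: u_def)
    then show ?thesis using mge[OF i(1)] by linarith
  qed
  show "Re \<mu> < -1"
  proof (rule ccontr)
    assume "\<not> Re \<mu> < -1"
    then have re: "Re \<mu> \<ge> -1" by simp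
    have lhs: "cmod ((\<mu> + of_real (g i + real (i+1))) * u i) \<ge> (g i + real i) * m"
      if "i < C" "cmod (u i) = m" for i
    proof -
      have "g i + real i \<le> Re (\<mu> + of_real (g i + real (i+1)))" using re by simp
      also have "\<dots> \<le> cmod (\<mu> + of_real (g i + real (i+1)))" by (rule complex_Re_le_cmod)
      finally have "(g i + real i) * m \<le> cmod (\<mu> + of_real (g i + real (i+1))) * m"
        using mpos by (intro mult_right_mono) auto
      then show ?thesis using that by (simp add: norm_mult)
    qed
    have im1: "cmod (of_nat i * u (i - 1)) \<le> real i * m" if "i < C" for i
    proof -
      have "cmod (u (i-1)) \<le> m" using that by (intro mge) auto
      then show ?thesis by (simp add: norm_mult mult_left_mono)
    qed
    have propg: "\<And>k. i0 + k < C \<Longrightarrow> cmod (u (i0 + k)) = m"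
    proof -
      fix k show "i0 + k < C \<Longrightarrow> cmod (u (i0 + k)) = m"
      proof (induction k)
        case 0 then show ?case using i0 by simp
      next
        case (Suc k)
        define i where "i = i0 + k"
        have i: "i < C" "i + 1 < C" "cmod (u i) = m" using Suc unfolding i_def by auto
        have gi: "g i > 0" using gpos i by auto
        have "(g i + real i) * m \<le> cmod (of_nat i * u (i - 1) + of_real (g i) * u (i+1))"
          using lhs[OF i(1) i(3)] rec[OF i(1)] i(2) by simp
        also have "\<dots> \<le> cmod (of_nat i * u (i - 1)) + cmod (of_real (g i) * u (i+1))"
          by (rule norm_triangle_ineq)
        also have "\<dots> \<le> real i * m + g i * cmod (u (i+1))"
          using im1[OF i(1)] gi by (simp add: norm_mult)
        finally have "g i * m \<le> g i * cmod (u (i+1))" by (simp add: algebra_simps)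
        then have "m \<le> cmod (u (i+1))" using gi by simp
        moreover have "cmod (u (i+1)) \<le> m" using mge i by auto
        ultimately show ?case unfolding i_def by simp
      qed
    qed
    define i where "i = C - 1"
    have i: "i < C" "\<not> i + 1 < C" "cmod (u i) = m"
      using propg[of "C - 1 - i0"] i0 C0 unfolding i_def by auto
    have gi: "g i > 0" using gpos i by auto
    have "(g i + real i) * m \<le> cmod (of_nat i * u (i - 1))"
      using lhs[OF i(1) i(3)] rec[OF i(1)] i(2) by simp
    also have "\<dots> \<le> real i * m" by (rule im1[OF i(1)])
    finally have "g i * m \<le> 0" by (simp add: algebra_simps)
    then show False using gi mpos by (simp add: mult_le_0_iff)
  qed
qed


theorem mainTheorem8:
  fixes C d :: nat and \<sigma> :: real and \<pi> :: "nat \<Rightarrow> real"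
  assumes "C \<ge> 1" and "d \<ge> 1" and "\<sigma> > 0"
    and "\<pi> 0 = 1"
    and "\<forall>n\<in>{1..C}. \<pi> n \<le> \<pi> (n - 1)"
    and "\<pi> C \<ge> 0"
    and "\<pi> (C + 1) = 0"
    and "\<forall>n\<in>{1..C}. \<sigma> * (\<pi> (n - 1) ^ d - \<pi> n ^ d) = real n * (\<pi> n - \<pi> (n + 1))"
  shows "\<forall>\<mu>::complex. eigenvalue (map_mat complex_of_real (Hmat C \<sigma> d \<pi>)) \<mu>
           \<longrightarrow> \<mu> \<in> \<real> \<and> Re \<mu> < -1"
proof (intro allI impI)
  fix \<mu> :: complex
  assume ev: "eigenvalue (map_mat complex_of_real (Hmat C \<sigma> d \<pi>)) \<mu>"
  have nonneg: "\<And>k. k \<le> C + 1 \<Longrightarrow> \<pi> (C + 1 - k) \<ge> 0"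
  proof -
    fix k show "k \<le> C + 1 \<Longrightarrow> \<pi> (C + 1 - k) \<ge> 0"
    proof (induction k)
      case 0 then show ?case using assms(7) by simp
    next
      case (Suc k)
      show ?case
      proof (cases k)
        case 0 then show ?thesis using assms(6) by simp
      next
        case (Suc k')
        have n: "C + 1 - k \<in> {1..C}" using Suc.prems \<open>k = Suc k'\<close> by auto
        have "\<pi> (C + 1 - k) \<le> \<pi> (C + 1 - k - 1)" using assms(5) n by blast
        moreover have "C + 1 - k - 1 = C + 1 - Suc k" by simp
        ultimately show ?thesis using Suc.IH Suc.prems by simp
      qed
    qed
  qed
  have nn: "\<And>n. n \<le> C + 1 \<Longrightarrow> \<pi> n \<ge> 0"
  proof -
    fix n assume "n \<le> C + 1"
    then show "\<pi> n \<ge> 0" using nonneg[of "C + 1 - n"] by simp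
  qed
  have pos: "\<And>n. n \<le> C \<Longrightarrow> \<pi> n > 0"
  proof -
    fix n show "n \<le> C \<Longrightarrow> \<pi> n > 0"
    proof (induction n)
      case 0 then show ?case using assms(4) by simp
    next
      case (Suc n)
      have prev: "\<pi> n > 0" using Suc by simp
      show ?case
      proof (rule ccontr)
        assume "\<not> \<pi> (Suc n) > 0"
        then have z: "\<pi> (Suc n) = 0" using nn[of "Suc n"] Suc.prems by simp
        have "\<sigma> * (\<pi> n ^ d - \<pi> (Suc n) ^ d) = real (Suc n) * (\<pi> (Suc n) - \<pi> (Suc n + 1))"
          using assms(8) Suc.prems by (metis atLeastAtMost_iff diff_Suc_1 le_add1 plus_1_eq_Suc add.commute)
        moreover have "\<pi> (Suc n) ^ d = 0" using z assms(2) by simp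
        ultimately have "\<sigma> * \<pi> n ^ d = - (real (Suc n) * \<pi> (Suc n + 1))" using z assms(2) by (simp add: zero_power)
        moreover have "\<pi> (Suc n + 1) \<ge> 0" using nn Suc.prems by simp
        moreover have "\<sigma> * \<pi> n ^ d > 0" using prev assms(3) by simp
        ultimately show False
          by (smt (verit) mult_nonneg_nonneg of_nat_0_le_iff)
      qed
    qed
  qed
  define g where "g i = gam \<sigma> d \<pi> (i + 1)" for i
  have gpos: "\<forall>i<C. g i > 0"
    using pos assms(2,3) by (auto simp: g_def gam_def)
  obtain v where v: "v \<in> carrier_vec C" "v \<noteq> 0\<^sub>v C"
     "map_mat complex_of_real (Hmat C \<sigma> d \<pi>) *\<^sub>v v = \<mu> \<cdot>\<^sub>v v"
    using ev unfolding eigenvalue_def eigenvector_def by (auto simp: Hmat_def)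
  have dv: "dim_vec v = C" using v(1) by simp
  have eig: "\<forall>i<C. (\<Sum>j<C. complex_of_real (Mf g i j) * v $ j) = \<mu> * v $ i"
  proof (intro allI impI)
    fix i assume i: "i < C"
    have "(map_mat complex_of_real (Hmat C \<sigma> d \<pi>) *\<^sub>v v) $ i = \<mu> * v $ i"
      using v(3) i dv by simp
    moreover have "(map_mat complex_of_real (Hmat C \<sigma> d \<pi>) *\<^sub>v v) $ i =
        (\<Sum>j<C. complex_of_real (Mf g i j) * v $ j)"
      using i dv
      by (auto simp: Hmat_def scalar_prod_def atLeast0LessThan Mf_def g_def nu_def
               intro!: sum.cong)
    ultimately show "(\<Sum>j<C. complex_of_real (Mf g i j) * v $ j) = \<mu> * v $ i" by simp
  qed
  have nz: "\<exists>i<C. v $ i \<noteq> 0"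
  proof (rule ccontr)
    assume "\<not> ?thesis"
    then have "v = 0\<^sub>v C" using dv by (intro eq_vecI) auto
    then show False using v(2) by simp
  qed
  show "\<mu> \<in> \<real> \<and> Re \<mu> < -1" by (rule tri_main[OF gpos eig nz])
qed

end
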